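(* Let $m,n\in\mathbb{N}$, $q\in(-1,1)\setminus\{0\}$, $\alpha_\pm\in(-1,1)$ and $\beta_\pm\in\mathbb{R}$. Then the operator $H$ defined in the context is self-adjoint in $\ell^2(\Lambda^{(n,m)},\Delta)$, i.e. $\langle H\psi,\phi\rangle_\Delta=\langle\psi,H\phi\rangle_\Delta$ for all $\psi,\phi\in\ell^2(\Lambda^{(n,m)},\Delta)$.
   Context: Let $\Lambda^{(n,m)}=\{\mu\in\mathbb{Z}^n\mid m\ge\mu_1\ge\mu_2\ge\cdots\ge\mu_n\ge0\}$, and for $\mu\in\Lambda^{(n,m)}$ use the conventions $\mu_0\equiv m$, $\mu_{n+1}\equiv 0$. Let $e_1,\dots,e_n$ be the standard unit vectors of $\mathbb{Z}^n$, and $\delta_i=1$ if $i=0$, $\delta_i=0$ otherwise. The $q$-difference Toda hamiltonian $H$ acts on functions $\psi:\Lambda^{(n,m)}\to\mathbb{C}$ by $(H\psi)(\mu)=\bigl(\beta_+(1-q^{m-\mu_1})+\beta_-(1-q^{\mu_n})\bigr)\psi(\mu)+\sum_{1\le i\le n,\ \mu+e_i\in\Lambda^{(n,m)}}(1-\alpha_+q^{m-\mu_1-1})^{\delta_{i-1}}(1-q^{\mu_{i-1}-\mu_i})\psi(\mu+e_i)+\sum_{1\le i\le n,\ \mu-e_i\in\Lambda^{(n,m)}}(1-\alpha_-q^{\mu_n-1})^{\delta_{n-i}}(1-q^{\mu_i-\mu_{i+1}})\psi(\mu-e_i)$. With $(a;q)_0=1$, $(a;q)_l=(1-a)(1-aq)\cdots(1-aq^{l-1})$,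 define the positive weights $\Delta_\mu=\dfrac{(q;q)_m}{(\alpha_+;q)_{m-\mu_1}(\alpha_-;q)_{\mu_n}\prod_{0\le i\le n}(q;q)_{\mu_i-\mu_{i+1}}}$ for $\mu\in\Lambda^{(n,m)}$, and let $\ell^2(\Lambda^{(n,m)},\Delta)$ be the space of functions $\Lambda^{(n,m)}\to\mathbb{C}$ with inner product $\langle\psi,\phi\rangle_\Delta=\sum_{\mu\in\Lambda^{(n,m)}}\psi(\mu)\overline{\phi(\mu)}\Delta_\mu$. *)

theory Defs
  imports "HOL-Analysis.Analysis"
begin

text \<open>Points mu of Lambda^(n,m) are represented as functions nat => int, with the
  coordinates mu 1, ..., mu n and mu i = 0 for i outside {1..n} (canonical representative).\<close>

definition Lam :: "nat \<Rightarrow> nat \<Rightarrow> (nat \<Rightarrow> int) set" where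
  "Lam n m = {mu. (\<forall>i. i \<notin> {1..n} \<longrightarrow> mu i = 0)
                 \<and> (\<forall>i\<in>{1..n}. mu i \<le> int m \<and> 0 \<le> mu i)
                 \<and> (\<forall>i\<in>{1..<n}. mu (Suc i) \<le> mu i)}"

definition ext :: "nat \<Rightarrow> nat \<Rightarrow> (nat \<Rightarrow> int) \<Rightarrow> nat \<Rightarrow> int" where
  "ext n m mu i = (if i = 0 then int m else if i = Suc n then 0 else mu i)"

definition unitv :: "nat \<Rightarrow> nat \<Rightarrow> int" where
  "unitv i = (\<lambda>j. if j = i then 1 else 0)"

definition qpoch :: "real \<Rightarrow> real \<Rightarrow> nat \<Rightarrow> real" where
  "qpoch a q l = (\<Prod>j<l. (1 - a * q ^ j))"

definition todaH ::
  "nat \<Rightarrow> nat \<Rightarrow> real \<Rightarrow> real \<Rightarrow> real \<Rightarrow> real \<Rightarrow> real \<Rightarrow>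
   ((nat \<Rightarrow> int) \<Rightarrow> complex) \<Rightarrow> (nat \<Rightarrow> int) \<Rightarrow> complex" where
  "todaH n m q ap am bp bm psi mu =
     complex_of_real (bp * (1 - q ^ nat (int m - mu 1)) + bm * (1 - q ^ nat (mu n))) * psi mu
   + (\<Sum>i\<in>{i\<in>{1..n}. (\<lambda>j. mu j + unitv i j) \<in> Lam n m}.
        complex_of_real ((if i = 1 then 1 - ap * q ^ nat (int m - mu 1 - 1) else 1)
           * (1 - q ^ nat (ext n m mu (i - 1) - ext n m mu i)))
        * psi ((\<lambda>j. mu j + unitv i j)))
   + (\<Sum>i\<in>{i\<in>{1..n}. (\<lambda>j. mu j - unitv i j) \<in> Lam n m}.
        complex_of_real ((if i = n then 1 - am * q ^ nat (mu n - 1) else 1)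
           * (1 - q ^ nat (ext n m mu i - ext n m mu (Suc i))))
        * psi ((\<lambda>j. mu j - unitv i j)))"

definition Delta :: "nat \<Rightarrow> nat \<Rightarrow> real \<Rightarrow> real \<Rightarrow> real \<Rightarrow> (nat \<Rightarrow> int) \<Rightarrow> real" where
  "Delta n m q ap am mu =
     qpoch q q m /
     (qpoch ap q (nat (int m - mu 1)) * qpoch am q (nat (mu n))
      * (\<Prod>i\<in>{0..n}. qpoch q q (nat (ext n m mu i - ext n m mu (Suc i)))))"

definition innerD ::
  "nat \<Rightarrow> nat \<Rightarrow> real \<Rightarrow> real \<Rightarrow> real \<Rightarrow>
   ((nat \<Rightarrow> int) \<Rightarrow> complex) \<Rightarrow> ((nat \<Rightarrow> int) \<Rightarrow> complex) \<Rightarrow> complex" where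
  "innerD n m q ap am psi phi =
     (\<Sum>mu\<in>Lam n m. psi mu * cnj (phi mu) * complex_of_real (Delta n m q ap am mu))"

end

theory Submission
  imports Defs
begin

abbreviation upv :: "nat \<Rightarrow> (nat \<Rightarrow> int) \<Rightarrow> nat \<Rightarrow> int" where
  "upv i mu \<equiv> (\<lambda>j. mu j + unitv i j)"
abbreviation dnv :: "nat \<Rightarrow> (nat \<Rightarrow> int) \<Rightarrow> nat \<Rightarrow> int" where
  "dnv i mu \<equiv> (\<lambda>j. mu j - unitv i j)"

definition Acoef where
  "Acoef n m q ap mu i = (if i = 1 then 1 - ap * q ^ nat (int m - mu 1 - 1) else 1)
           * (1 - q ^ nat (ext n m mu (i - 1) - ext n m mu i))"
definition Bcoef where
  "Bcoef n m q am mu i = (if i = n then 1 - am * q ^ nat (mu n - 1) else 1)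
           * (1 - q ^ nat (ext n m mu i - ext n m mu (Suc i)))"

lemma todaH_eq: "todaH n m q ap am bp bm psi mu =
     complex_of_real (bp * (1 - q ^ nat (int m - mu 1)) + bm * (1 - q ^ nat (mu n))) * psi mu
   + (\<Sum>i\<in>{i\<in>{1..n}. upv i mu \<in> Lam n m}. complex_of_real (Acoef n m q ap mu i) * psi (upv i mu))
   + (\<Sum>i\<in>{i\<in>{1..n}. dnv i mu \<in> Lam n m}. complex_of_real (Bcoef n m q am mu i) * psi (dnv i mu))"
  by (simp add: todaH_def Acoef_def Bcoef_def)

lemma finite_Lam: "finite (Lam n m)"
proof -
  have "Lam n m \<subseteq> {f. \<forall>x. (x \<in> {1..n} \<longrightarrow> f x \<in> {0..int m}) \<and> (x \<notin> {1..n} \<longrightarrow> f x = 0)}"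
    by (auto simp: Lam_def)
  moreover have "finite {f. \<forall>x. (x \<in> {1..n} \<longrightarrow> f x \<in> {0..int m}) \<and> (x \<notin> {1..n} \<longrightarrow> f x = (0::int))}"
    by (rule finite_set_of_finite_funs) auto
  ultimately show ?thesis by (rule finite_subset)
qed

lemma swap_sum:
  fixes F :: "(nat \<Rightarrow> int) \<Rightarrow> nat \<Rightarrow> 'a::comm_monoid_add"
  shows "(\<Sum>mu\<in>Lam n m. \<Sum>i\<in>{i\<in>{1..n}. upv i mu \<in> Lam n m}. F mu i)
       = (\<Sum>nu\<in>Lam n m. \<Sum>i\<in>{i\<in>{1..n}. dnv i nu \<in> Lam n m}. F (dnv i nu) i)"
proof -
  have fin: "finite (Lam n m)" by (rule finite_Lam)
  have "(\<Sum>mu\<in>Lam n m. \<Sum>i\<in>{i\<in>{1..n}. upv i mu \<in> Lam n m}. F mu i)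
      = (\<Sum>mu\<in>Lam n m. \<Sum>i\<in>{1..n}. if upv i mu \<in> Lam n m then F mu i else 0)"
    by (simp only: sum.inter_filter[OF finite_atLeastAtMost])
  also have "\<dots> = (\<Sum>i\<in>{1..n}. \<Sum>mu\<in>Lam n m. if upv i mu \<in> Lam n m then F mu i else 0)"
    by (rule sum.swap)
  also have "\<dots> = (\<Sum>i\<in>{1..n}. \<Sum>mu\<in>{mu\<in>Lam n m. upv i mu \<in> Lam n m}. F mu i)"
    using fin by (simp add: sum.inter_filter)
  also have "\<dots> = (\<Sum>i\<in>{1..n}. \<Sum>nu\<in>{nu\<in>Lam n m. dnv i nu \<in> Lam n m}. F (dnv i nu) i)"
  proof (rule sum.cong[OF refl])
    fix i
    show "(\<Sum>mu\<in>{mu\<in>Lam n m. upv i mu \<in> Lam n m}. F mu i)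
        = (\<Sum>nu\<in>{nu\<in>Lam n m. dnv i nu \<in> Lam n m}. F (dnv i nu) i)"
      by (rule sum.reindex_bij_witness[of _ "dnv i" "upv i"]) auto
  qed
  also have "\<dots> = (\<Sum>i\<in>{1..n}. \<Sum>nu\<in>Lam n m. if dnv i nu \<in> Lam n m then F (dnv i nu) i else 0)"
    using fin by (simp add: sum.inter_filter)
  also have "\<dots> = (\<Sum>nu\<in>Lam n m. \<Sum>i\<in>{1..n}. if dnv i nu \<in> Lam n m then F (dnv i nu) i else 0)"
    by (rule sum.swap)
  also have "\<dots> = (\<Sum>nu\<in>Lam n m. \<Sum>i\<in>{i\<in>{1..n}. dnv i nu \<in> Lam n m}. F (dnv i nu) i)"
    by (simp only: sum.inter_filter[OF finite_atLeastAtMost])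
  finally show ?thesis .
qed

lemma qpoch_Suc: "qpoch a q (Suc k) = qpoch a q k * (1 - a * q ^ k)"
  by (simp add: qpoch_def)

lemma qpoch_pos:
  assumes "\<bar>a\<bar> < 1" "\<bar>q\<bar> < 1"
  shows "qpoch a q k > 0"
  unfolding qpoch_def
proof (rule prod_pos)
  fix j assume "j \<in> {..<k}"
  have "\<bar>q ^ j\<bar> \<le> 1" using assms(2) by (simp add: power_abs power_le_one)
  hence "\<bar>a * q ^ j\<bar> < 1" using assms(1)
    by (simp add: abs_mult) (metis abs_ge_zero le_less_trans mult_left_le mult.commute)
  thus "0 < 1 - a * q ^ j" by linarith
qed

lemma ext_mono:
  assumes "mu \<in> Lam n m" "1 \<le> n" "j \<le> n"
  shows "ext n m mu (Suc j) \<le> ext n m mu j"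
  using assms unfolding Lam_def ext_def
  by (cases "j = 0"; cases "j = n") (auto simp: Ball_def)

lemma ext_dn:
  assumes "i \<in> {1..n}"
  shows "ext n m (dnv i mu) j = ext n m mu j - (if j = i then 1 else 0)"
  using assms by (auto simp: ext_def unitv_def)

lemma prod_two:
  assumes "finite S" "a \<in> S" "b \<in> S" "a \<noteq> b"
  shows "prod f S = f a * f b * prod f (S - {a, b})"
proof -
  have "prod f S = f a * prod f (S - {a})" using assms by (simp add: prod.remove)
  also have "prod f (S - {a}) = f b * prod f (S - {a} - {b})"
    using assms by (intro prod.remove) auto
  finally show ?thesis by (simp add: mult.assoc Diff_insert2[symmetric] insert_commute)
qed

lemma alg:
  fixes C Pa Pbm Pm Pn al be X Y :: real
  assumes "Pa > 0" "Pbm > 0" "Pm > 0" "Pn > 0" "al > 0" "be > 0"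
    and "Pm * Y = Pn * X"
  shows "C / (Pa * al * Pbm * Pm) * (al * X) = C / (Pa * (Pbm * be) * Pn) * (be * Y)"
proof -
  have "C / (Pa * al * Pbm * Pm) * (al * X) = C * X / (Pa * Pbm * Pm)" using assms by (simp add: field_simps)
  also have "\<dots> = C * X * Pn / (Pa * Pbm * Pm * Pn)" using assms by simp
  also have "\<dots> = C * Y * Pm / (Pa * Pbm * Pm * Pn)" using assms(7) by (simp add: mult.commute mult.left_commute)
  also have "\<dots> = C / (Pa * (Pbm * be) * Pn) * (be * Y)" using assms by (simp add: field_simps)
  finally show ?thesis .
qed

lemma key:
  assumes n1: "1 \<le> n" and q: "\<bar>q\<bar> < 1" and ap: "\<bar>ap\<bar> < 1" and am: "\<bar>am\<bar> < 1"
    and nu: "nu \<in> Lam n m" and i: "i \<in> {1..n}" and mu: "dnv i nu \<in> Lam n m"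
  shows "Delta n m q ap am (dnv i nu) * Acoef n m q ap (dnv i nu) i
       = Delta n m q ap am nu * Bcoef n m q am nu i"
proof -
  define mu where "mu = dnv i nu"
  have mu': "mu \<in> Lam n m" using mu by (simp add: mu_def)
  define E where "E x j = ext n m x j" for x j
  define g where "g x j = nat (E x j - E x (Suc j))" for x j
  have Emu: "E mu j = E nu j - (if j = i then 1 else 0)" for j
    unfolding E_def mu_def using ext_dn[OF i] by simp
  have mu1: "mu 1 = nu 1 - (if i = 1 then 1 else 0)" by (simp add: mu_def unitv_def)
  have mun: "mu n = nu n - (if i = n then 1 else 0)" by (simp add: mu_def unitv_def)
  have nu1: "nu 1 \<le> int m" using nu n1 by (auto simp: Lam_def)
  have mun0: "0 \<le> mu n" using mu' n1 by (auto simp: Lam_def)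
  define al where "al = (if i = 1 then 1 - ap * q ^ nat (int m - mu 1 - 1) else 1)"
  define be where "be = (if i = n then 1 - am * q ^ nat (nu n - 1) else 1)"
  have lt1: "\<bar>c * q ^ k\<bar> < 1" if "\<bar>c\<bar> < 1" for c k
  proof -
    have "\<bar>q ^ k\<bar> \<le> 1" using q by (simp add: power_abs power_le_one)
    thus ?thesis using that
      by (simp add: abs_mult) (metis abs_ge_zero le_less_trans mult_left_le mult.commute)
  qed
  have al0: "al > 0" unfolding al_def using lt1[OF ap] by (auto simp: abs_less_iff)
  have be0: "be > 0" unfolding be_def using lt1[OF am] by (auto simp: abs_less_iff)
  have Pa: "qpoch ap q (nat (int m - mu 1)) = qpoch ap q (nat (int m - nu 1)) * al"
  proof (cases "i = 1")
    case True
    then have "nat (int m - mu 1) = Suc (nat (int m - nu 1))" "nat (int m - mu 1 - 1) = nat (int m - nu 1)"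
      using mu1 nu1 by auto
    then show ?thesis using True by (simp add: al_def qpoch_Suc)
  next
    case False
    then have "mu 1 = nu 1" using mu1 by simp
    then show ?thesis using False by (simp add: al_def)
  qed
  have Pb: "qpoch am q (nat (nu n)) = qpoch am q (nat (mu n)) * be"
  proof (cases "i = n")
    case True
    then have "nat (nu n) = Suc (nat (mu n))" "nat (nu n - 1) = nat (mu n)"
      using mun mun0 by auto
    then show ?thesis using True by (simp add: be_def qpoch_Suc)
  next
    case False
    then have "mu n = nu n" using mun by simp
    then show ?thesis using False by (simp add: be_def)
  qed
  have i1: "i - 1 \<le> n" "Suc (i - 1) = i" "i \<le> n" "i \<ge> 1" using i by auto
  have m1: "E nu i \<le> E nu (i - 1)" using ext_mono[OF nu n1 i1(1)] i1(2) by (simp add: E_def)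
  have m2: "E mu (Suc i) \<le> E mu i" using ext_mono[OF mu' n1 i1(3)] by (simp add: E_def)
  have g1: "g mu (i - 1) = Suc (g nu (i - 1))"
    unfolding g_def using Emu[of "i-1"] Emu[of i] i1 m1 by auto
  have g2: "g nu i = Suc (g mu i)"
    unfolding g_def using Emu[of "Suc i"] Emu[of i] i1 m2 by auto
  have g3: "g mu j = g nu j" if "j \<in> {0..n} - {i - 1, i}" for j
  proof -
    have "j \<noteq> i" "Suc j \<noteq> i" using that i1 by auto
    thus ?thesis unfolding g_def using Emu[of j] Emu[of "Suc j"] by simp
  qed
  define P where "P x = (\<Prod>j\<in>{0..n}. qpoch q q (g x j))" for x
  have Pdec: "P x = qpoch q q (g x (i - 1)) * qpoch q q (g x i) * (\<Prod>j\<in>{0..n} - {i - 1, i}. qpoch q q (g x j))" for x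
    unfolding P_def using i1 by (intro prod_two) auto
  have R: "(\<Prod>j\<in>{0..n} - {i - 1, i}. qpoch q q (g mu j)) = (\<Prod>j\<in>{0..n} - {i - 1, i}. qpoch q q (g nu j))"
    using g3 by (intro prod.cong) auto
  define X where "X = 1 - q ^ g mu (i - 1)"
  define Y where "Y = 1 - q ^ g nu i"
  have PXY: "P mu * Y = P nu * X"
    unfolding Pdec R X_def Y_def g1 g2 by (simp add: qpoch_Suc algebra_simps)
  have qq: "\<bar>q\<bar> < 1" using q .
  have Ppos: "P x > 0" for x unfolding P_def by (intro prod_pos ballI qpoch_pos qq)
  have Pa0: "qpoch ap q k > 0" for k using qpoch_pos[OF ap q] .
  have Pb0: "qpoch am q k > 0" for k using qpoch_pos[OF am q] .
  have A: "Acoef n m q ap mu i = al * X"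
    unfolding Acoef_def al_def X_def g_def E_def using i1 by simp
  have B: "Bcoef n m q am nu i = be * Y"
    unfolding Bcoef_def be_def Y_def g_def E_def by simp
  have Dmu: "Delta n m q ap am mu = qpoch q q m / (qpoch ap q (nat (int m - nu 1)) * al * qpoch am q (nat (mu n)) * P mu)"
    unfolding Delta_def Pa P_def g_def E_def by (simp add: mult.assoc)
  have Dnu: "Delta n m q ap am nu = qpoch q q m / (qpoch ap q (nat (int m - nu 1)) * (qpoch am q (nat (mu n)) * be) * P nu)"
    unfolding Delta_def Pb[symmetric] P_def g_def E_def by (simp add: mult.assoc)
  show ?thesis
    unfolding mu_def[symmetric] A B Dmu Dnu
    by (rule alg[OF Pa0 Pb0 Ppos Ppos al0 be0 PXY])
qed

lemma offdiag:
  assumes n1: "1 \<le> n" and q: "\<bar>q\<bar> < 1" and ap: "\<bar>ap\<bar> < 1" and am: "\<bar>am\<bar> < 1"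
  shows "(\<Sum>mu\<in>Lam n m. (\<Sum>i\<in>{i\<in>{1..n}. upv i mu \<in> Lam n m}. complex_of_real (Acoef n m q ap mu i) * psi (upv i mu))
            * cnj (phi mu) * complex_of_real (Delta n m q ap am mu))
       = (\<Sum>nu\<in>Lam n m. psi nu * cnj (\<Sum>i\<in>{i\<in>{1..n}. dnv i nu \<in> Lam n m}. complex_of_real (Bcoef n m q am nu i) * phi (dnv i nu))
            * complex_of_real (Delta n m q ap am nu))"
proof -
  have "(\<Sum>mu\<in>Lam n m. (\<Sum>i\<in>{i\<in>{1..n}. upv i mu \<in> Lam n m}. complex_of_real (Acoef n m q ap mu i) * psi (upv i mu))
            * cnj (phi mu) * complex_of_real (Delta n m q ap am mu))
      = (\<Sum>mu\<in>Lam n m. \<Sum>i\<in>{i\<in>{1..n}. upv i mu \<in> Lam n m}.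
           complex_of_real (Delta n m q ap am mu * Acoef n m q ap mu i) * psi (upv i mu) * cnj (phi mu))"
    unfolding sum_distrib_right by (intro sum.cong refl) (simp add: mult_ac)
  also have "\<dots> = (\<Sum>nu\<in>Lam n m. \<Sum>i\<in>{i\<in>{1..n}. dnv i nu \<in> Lam n m}.
           complex_of_real (Delta n m q ap am (dnv i nu) * Acoef n m q ap (dnv i nu) i) * psi (upv i (dnv i nu)) * cnj (phi (dnv i nu)))"
    by (rule swap_sum)
  also have "\<dots> = (\<Sum>nu\<in>Lam n m. \<Sum>i\<in>{i\<in>{1..n}. dnv i nu \<in> Lam n m}.
           complex_of_real (Delta n m q ap am nu * Bcoef n m q am nu i) * psi nu * cnj (phi (dnv i nu)))"
  proof (intro sum.cong refl)
    fix nu i assume nu: "nu \<in> Lam n m" and "i \<in> {i\<in>{1..n}. dnv i nu \<in> Lam n m}"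
    then have i: "i \<in> {1..n}" and mu: "dnv i nu \<in> Lam n m" by auto
    have "upv i (dnv i nu) = nu" by simp
    then show "complex_of_real (Delta n m q ap am (dnv i nu) * Acoef n m q ap (dnv i nu) i) * psi (upv i (dnv i nu)) * cnj (phi (dnv i nu))
       = complex_of_real (Delta n m q ap am nu * Bcoef n m q am nu i) * psi nu * cnj (phi (dnv i nu))"
      using key[OF n1 q ap am nu i mu] by simp
  qed
  also have "\<dots> = (\<Sum>nu\<in>Lam n m. psi nu * cnj (\<Sum>i\<in>{i\<in>{1..n}. dnv i nu \<in> Lam n m}. complex_of_real (Bcoef n m q am nu i) * phi (dnv i nu))
            * complex_of_real (Delta n m q ap am nu))"
    by (simp add: sum_distrib_right sum_distrib_left mult_ac)
  finally show ?thesis .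
qed

theorem proposition2p1:
  fixes n m :: nat and q ap am bp bm :: real
    and psi phi :: "(nat \<Rightarrow> int) \<Rightarrow> complex"
  assumes "1 \<le> n"
    and "-1 < q" "q < 1" "q \<noteq> 0"
    and "-1 < ap" "ap < 1" "-1 < am" "am < 1"
  shows "innerD n m q ap am (todaH n m q ap am bp bm psi) phi
       = innerD n m q ap am psi (todaH n m q ap am bp bm phi)"
proof -
  have q: "\<bar>q\<bar> < 1" and ap: "\<bar>ap\<bar> < 1" and am: "\<bar>am\<bar> < 1" using assms by auto
  define L where "L = Lam n m"
  define D where "D mu = complex_of_real (Delta n m q ap am mu)" for mu
  define d where "d mu = complex_of_real (bp * (1 - q ^ nat (int m - mu 1)) + bm * (1 - q ^ nat (mu n)))" for mu :: "nat \<Rightarrow> int"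
  define U where "U f mu = (\<Sum>i\<in>{i\<in>{1..n}. upv i mu \<in> Lam n m}. complex_of_real (Acoef n m q ap mu i) * f (upv i mu))" for f mu
  define W where "W f mu = (\<Sum>i\<in>{i\<in>{1..n}. dnv i mu \<in> Lam n m}. complex_of_real (Bcoef n m q am mu i) * f (dnv i mu))" for f mu
  have T: "todaH n m q ap am bp bm f mu = d mu * f mu + U f mu + W f mu" for f mu
    unfolding todaH_eq d_def U_def W_def ..
  have cd: "cnj (d mu) = d mu" for mu by (simp add: d_def)
  have O1: "(\<Sum>mu\<in>L. U psi mu * cnj (phi mu) * D mu) = (\<Sum>mu\<in>L. psi mu * cnj (W phi mu) * D mu)"
    unfolding L_def U_def W_def D_def by (rule offdiag[OF assms(1) q ap am])
  have O2': "(\<Sum>mu\<in>L. U phi mu * cnj (psi mu) * D mu) = (\<Sum>mu\<in>L. phi mu * cnj (W psi mu) * D mu)"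
    unfolding L_def U_def W_def D_def by (rule offdiag[OF assms(1) q ap am])
  have O2: "(\<Sum>mu\<in>L. W psi mu * cnj (phi mu) * D mu) = (\<Sum>mu\<in>L. psi mu * cnj (U phi mu) * D mu)"
  proof -
    have cD: "cnj (D mu) = D mu" for mu by (simp add: D_def)
    have "(\<Sum>mu\<in>L. W psi mu * cnj (phi mu) * D mu) = cnj (\<Sum>mu\<in>L. phi mu * cnj (W psi mu) * D mu)"
      by (simp add: cD mult_ac)
    also have "\<dots> = cnj (\<Sum>mu\<in>L. U phi mu * cnj (psi mu) * D mu)" using O2' by simp
    also have "\<dots> = (\<Sum>mu\<in>L. psi mu * cnj (U phi mu) * D mu)" by (simp add: cD mult_ac)
    finally show ?thesis .
  qed
  have "innerD n m q ap am (todaH n m q ap am bp bm psi) phi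
      = (\<Sum>mu\<in>L. d mu * psi mu * cnj (phi mu) * D mu) + (\<Sum>mu\<in>L. U psi mu * cnj (phi mu) * D mu)
        + (\<Sum>mu\<in>L. W psi mu * cnj (phi mu) * D mu)"
    unfolding innerD_def T L_def D_def by (simp add: sum.distrib algebra_simps)
  also have "\<dots> = (\<Sum>mu\<in>L. psi mu * cnj (d mu * phi mu) * D mu) + (\<Sum>mu\<in>L. psi mu * cnj (W phi mu) * D mu)
        + (\<Sum>mu\<in>L. psi mu * cnj (U phi mu) * D mu)"
    unfolding O1 O2 by (simp add: cd mult_ac)
  also have "\<dots> = innerD n m q ap am psi (todaH n m q ap am bp bm phi)"
    unfolding innerD_def T L_def D_def by (simp add: sum.distrib algebra_simps)
  finally show ?thesis .
qed

end
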